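(* If $x\in\mathbb{R}$ satisfies $|x|\le1/8$ or $|x-T\pi|\le1/8$, then $\mathrm{Re}(H(x))\ge1/2$.
   Context: Rudin–Shapiro polynomials: $P_0(z)=Q_0(z)=1$ and for $s\ge0$, $P_{s+1}(z)=P_s(z)+z^{2^s}Q_s(z)$, $Q_{s+1}(z)=P_s(z)-z^{2^s}Q_s(z)$. Let $t$ be an odd positive integer and $T:=2^{t+10}$. For $x\in\mathbb{R}$ define $\alpha(x):=2^{-(t+1)/2}P_t(e^{ix/T})$, $\beta(x):=2^{-(t+1)/2}Q_t(e^{ix/T})$, and $H(x):=e^{ix}\alpha(x)+e^{2ix}\beta(x)$. *)

theory Defs
  imports "HOL-Analysis.Analysis"
begin

text \<open>Rudin--Shapiro polynomials, evaluated at a complex point z: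
  P_0 = Q_0 = 1, P_{s+1} = P_s + z^(2^s) Q_s, Q_{s+1} = P_s - z^(2^s) Q_s.\<close>
fun RS :: "nat \<Rightarrow> complex \<Rightarrow> complex \<times> complex" where
  "RS 0 z = (1, 1)"
| "RS (Suc s) z = (let (p, q) = RS s z in (p + z ^ (2 ^ s) * q, p - z ^ (2 ^ s) * q))"

definition RS_P :: "nat \<Rightarrow> complex \<Rightarrow> complex" where
  "RS_P s z = fst (RS s z)"

definition RS_Q :: "nat \<Rightarrow> complex \<Rightarrow> complex" where
  "RS_Q s z = snd (RS s z)"

definition RS_T :: "nat \<Rightarrow> real" where
  "RS_T t = 2 ^ (t + 10)"

definition RS_alpha :: "nat \<Rightarrow> real \<Rightarrow> complex" where
  "RS_alpha t x = complex_of_real (2 powr (- (real t + 1) / 2)) * RS_P t (cis (x / RS_T t))"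

definition RS_beta :: "nat \<Rightarrow> real \<Rightarrow> complex" where
  "RS_beta t x = complex_of_real (2 powr (- (real t + 1) / 2)) * RS_Q t (cis (x / RS_T t))"

definition RS_H :: "nat \<Rightarrow> real \<Rightarrow> complex" where
  "RS_H t x = cis x * RS_alpha t x + cis (2 * x) * RS_beta t x"

end

theory Submission
  imports Defs
begin


lemma RS_P_Suc: "RS_P (Suc s) z = RS_P s z + z ^ (2 ^ s) * RS_Q s z"
  by (simp add: RS_P_def RS_Q_def split: prod.splits)
lemma RS_Q_Suc: "RS_Q (Suc s) z = RS_P s z - z ^ (2 ^ s) * RS_Q s z"
  by (simp add: RS_P_def RS_Q_def split: prod.splits)
lemma RS_P0 [simp]: "RS_P 0 z = 1" by (simp add: RS_P_def)
lemma RS_Q0 [simp]: "RS_Q 0 z = 1" by (simp add: RS_Q_def)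

lemma parallelogram: "(cmod (a + b))^2 + (cmod (a - b))^2 = 2 * ((cmod a)^2 + (cmod b)^2)"
  by (simp only: cmod_power2) (simp add: algebra_simps power2_eq_square)

lemma norm_pair_par: "norm (a + b, a - b) = sqrt 2 * norm (a::complex, b)"
  unfolding norm_Pair parallelogram by (simp add: real_sqrt_mult[symmetric] distrib_left)

lemma RS_norm: assumes "cmod z = 1"
  shows "(cmod (RS_P s z))^2 + (cmod (RS_Q s z))^2 = 2 ^ (s+1)"
proof (induction s)
  case 0 then show ?case by simp
next
  case (Suc s)
  have "cmod (z ^ (2^s) * RS_Q s z) = cmod (RS_Q s z)" by (simp add: norm_mult norm_power assms)
  then show ?case using Suc by (simp add: RS_P_Suc RS_Q_Suc parallelogram del: norm_mult)
qed

lemma RS_Q_bound: assumes "cmod z = 1" shows "cmod (RS_Q s z) \<le> sqrt 2 ^ (s+1)"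
proof -
  have "(cmod (RS_Q s z))^2 \<le> 2 ^ (s+1)" using RS_norm[OF assms, of s] by (smt (verit) zero_le_power2)
  then have "cmod (RS_Q s z) \<le> sqrt (2 ^ (s+1))" using real_le_rsqrt by blast
  then show ?thesis by (metis real_sqrt_power)
qed

lemma RS_diff:
  assumes "cmod z = 1" "cmod z0 = 1"
  shows "norm (RS_P s z - RS_P s z0, RS_Q s z - RS_Q s z0)
     \<le> sqrt 2 ^ (s+1) * (\<Sum>k<s. cmod (z^(2^k) - z0^(2^k)))"
proof (induction s)
  case 0 then show ?case by simp
next
  case (Suc s)
  define w where "w = z^(2^s)"
  define w0 where "w0 = z0^(2^s)"
  define a where "a = RS_P s z - RS_P s z0"
  define d where "d = RS_Q s z - RS_Q s z0"
  define c where "c = (\<Sum>k<s. cmod (z^(2^k) - z0^(2^k)))"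
  define b where "b = w * d + (w - w0) * RS_Q s z0"
  have cw: "cmod w = 1" by (simp add: w_def norm_power assms)
  have eq: "(RS_P (Suc s) z - RS_P (Suc s) z0, RS_Q (Suc s) z - RS_Q (Suc s) z0) = (a + b, a - b)"
    by (simp add: RS_P_Suc RS_Q_Suc a_def b_def d_def w_def w0_def algebra_simps)
  have "norm (a, b) \<le> norm (a, w*d) + norm ((0::complex), (w - w0) * RS_Q s z0)"
    unfolding b_def by (metis add_0_right norm_triangle_ineq add_Pair)
  also have "norm (a, w*d) = norm (a, d)" by (simp add: norm_Pair norm_mult cw)
  also have "norm ((0::complex), (w - w0) * RS_Q s z0) \<le> cmod (w - w0) * sqrt 2 ^ (s+1)"
    using RS_Q_bound[OF assms(2), of s] by (simp add: norm_mult mult_left_mono)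
  finally have "norm (a, b) \<le> norm (a, d) + cmod (w - w0) * sqrt 2 ^ (s+1)" by simp
  also have "norm (a, d) \<le> sqrt 2 ^ (s+1) * c" using Suc by (simp add: a_def d_def c_def)
  finally have nb: "norm (a, b) \<le> sqrt 2 ^ (s+1) * (c + cmod (w - w0))" by (simp add: algebra_simps)
  have "norm (a + b, a - b) = sqrt 2 * norm (a, b)" by (rule norm_pair_par)
  also have "\<dots> \<le> sqrt 2 * (sqrt 2 ^ (s+1) * (c + cmod (w - w0)))"
    using nb by (simp add: mult_left_mono)
  also have "\<dots> = sqrt 2 ^ (Suc s + 1) * (\<Sum>k<Suc s. cmod (z^(2^k) - z0^(2^k)))"
    by (simp add: c_def w_def w0_def)
  finally show ?case using eq by simp
qed

lemma cis_diff: "cmod (cis a - cis b) \<le> \<bar>a - b\<bar>"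
proof -
  have "(cmod (cis a - cis b))^2 = (cos a - cos b)^2 + (sin a - sin b)^2"
    by (simp add: cmod_power2)
  also have "\<dots> = 2 - 2 * cos (a - b)"
    by (simp add: power2_eq_square cos_diff algebra_simps)
  also have "\<dots> = 4 * (sin ((a - b)/2))^2"
  proof -
    have "cos (a-b) = cos (2*((a-b)/2))" by (simp only: nonzero_mult_div_cancel_left times_divide_eq_right zero_neq_numeral not_False_eq_True)
    also have "\<dots> = 1 - 2 * (sin ((a - b)/2))^2" by (rule cos_double_sin)
    finally show ?thesis by simp
  qed
  also have "\<dots> \<le> 4 * ((a-b)/2)^2"
    using abs_sin_x_le_abs_x[of "(a-b)/2"] abs_le_square_iff by (metis mult_left_mono zero_le_numeral)
  also have "\<dots> = (a - b)^2" by (simp add: power2_eq_square)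
  finally show ?thesis by (metis abs_le_square_iff abs_norm_cancel)
qed

lemma cos_lb: "1 - (u::real)^2/2 \<le> cos u"
proof -
  have "cos u = 1 - 2 * (sin (u/2))^2" using cos_double_sin[of "u/2"] by simp
  moreover have "(sin (u/2))^2 \<le> (u/2)^2"
    using abs_sin_x_le_abs_x[of "u/2"] by (metis abs_le_square_iff)
  ultimately show ?thesis by (simp add: power2_eq_square)
qed


lemma sum_cis: "(\<Sum>k<s. cmod (cis a ^ (2^k) - cis b ^ (2^k))) \<le> (2^s - 1) * \<bar>a - b\<bar>"
proof (induction s)
  case 0 then show ?case by simp
next
  case (Suc s)
  have "cmod (cis a ^ (2^s) - cis b ^ (2^s)) \<le> \<bar>2^s * a - 2^s * b\<bar>"
    using cis_diff[of "2^s * a" "2^s * b"] Complex.DeMoivre[of a "2^s"] Complex.DeMoivre[of b "2^s"] by simp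
  also have "\<dots> = 2^s * \<bar>a - b\<bar>" by (simp add: abs_mult right_diff_distrib[symmetric])
  finally show ?case using Suc by (simp add: algebra_simps)
qed

lemma RS_one: "RS_P (2*m+1) 1 = 2^(m+1) \<and> RS_Q (2*m+1) 1 = 0"
proof (induction m)
  case 0 then show ?case by (simp add: RS_P_Suc RS_Q_Suc)
next
  case (Suc m)
  have e: "2 * Suc m + 1 = Suc (Suc (2*m+1))" by simp
  have h: "RS_P (2*m+1) 1 = 2^(m+1)" "RS_Q (2*m+1) 1 = 0" using Suc by auto
  show ?case unfolding e RS_P_Suc RS_Q_Suc h by simp
qed

lemma RS_mone: "RS_P (2*m+1) (-1) = 0 \<and> RS_Q (2*m+1) (-1) = 2^(m+1)"
proof (induction m)
  case 0 then show ?case by (simp add: RS_P_Suc RS_Q_Suc)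
next
  case (Suc m)
  have e: "2 * Suc m + 1 = Suc (Suc (2*m+1))" by simp
  have p1: "(-1::complex) ^ (2 ^ (2*m+1)) = 1" by (simp add: power_mult)
  have p2: "(-1::complex) ^ (2 ^ Suc (2*m+1)) = 1" by (simp add: power_mult)
  have h: "RS_P (2*m+1) (-1) = 0" "RS_Q (2*m+1) (-1) = 2^(m+1)" using Suc by auto
  show ?case unfolding e RS_P_Suc RS_Q_Suc h p1 p2 by simp
qed



lemma approx:
  assumes t: "t = 2*m+1"
  shows "cmod (RS_alpha t x - RS_P t (cis (x0 / RS_T t)) / 2^(m+1)) \<le> \<bar>x - x0\<bar> / 1024
       \<and> cmod (RS_beta t x - RS_Q t (cis (x0 / RS_T t)) / 2^(m+1)) \<le> \<bar>x - x0\<bar> / 1024"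
proof -
  define T where "T = RS_T t"
  have T: "T = 2^(t+10)" by (simp add: T_def RS_T_def)
  have Tpos: "T > 0" by (simp add: T)
  define N :: real where "N = 2^(m+1)"
  have Npos: "N > 0" by (simp add: N_def)
  have pw: "2 powr (- (real t + 1) / 2) = 1 / N"
  proof -
    have "- (real t + 1) / 2 = - real (m+1)" by (simp add: t)
    then have "2 powr (- (real t + 1) / 2) = 2 powr (- real (m+1))" by (simp only:)
    also have "\<dots> = inverse (2 powr real (m+1))" by (rule powr_minus)
    also have "2 powr real (m+1) = 2^(m+1)" by (rule powr_realpow) simp
    finally show ?thesis by (simp only: N_def inverse_eq_divide)
  qed
  have sq: "sqrt 2 ^ (t+1) = N"
  proof -
    have "sqrt 2 ^ (t+1) = sqrt 2 ^ (2*(m+1))" by (simp add: t)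
    also have "\<dots> = (sqrt 2 ^ 2) ^ (m+1)" by (rule power_mult)
    finally show ?thesis by (simp add: N_def)
  qed
  define z where "z = cis (x / T)"
  define z0 where "z0 = cis (x0 / T)"
  have D: "norm (RS_P t z - RS_P t z0, RS_Q t z - RS_Q t z0) \<le> N * ((2^t - 1) * \<bar>x/T - x0/T\<bar>)"
  proof -
    have "norm (RS_P t z - RS_P t z0, RS_Q t z - RS_Q t z0)
       \<le> sqrt 2 ^ (t+1) * (\<Sum>k<t. cmod (z^(2^k) - z0^(2^k)))"
      by (rule RS_diff) (simp_all add: z_def z0_def)
    also have "\<dots> \<le> N * ((2^t - 1) * \<bar>x/T - x0/T\<bar>)"
      unfolding sq z_def z0_def using Npos by (intro mult_left_mono sum_cis) auto
    finally show ?thesis .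
  qed
  have BC: "\<bar>x/T - x0/T\<bar> = \<bar>x - x0\<bar> / T" using Tpos by (simp add: diff_divide_distrib[symmetric])
  have "(2^t - 1) * \<bar>x/T - x0/T\<bar> \<le> 2^t * (\<bar>x - x0\<bar> / T)" unfolding BC using Tpos by (intro mult_right_mono) auto
  also have "2^t * (\<bar>x - x0\<bar> / T) = \<bar>x - x0\<bar> / 1024" by (simp add: T power_add)
  finally have Q: "(2^t - 1) * \<bar>x/T - x0/T\<bar> \<le> \<bar>x - x0\<bar> / 1024" .
  have "N * ((2^t - 1) * \<bar>x/T - x0/T\<bar>) \<le> N * (\<bar>x - x0\<bar> / 1024)"
    using Npos Q by (intro mult_left_mono) auto
  with D have D2: "norm (RS_P t z - RS_P t z0, RS_Q t z - RS_Q t z0) \<le> N * (\<bar>x - x0\<bar> / 1024)"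
    by (rule order_trans)
  have a: "RS_alpha t x - RS_P t z0 / 2^(m+1) = (RS_P t z - RS_P t z0) / N"
    unfolding RS_alpha_def pw by (simp add: z_def T_def N_def diff_divide_distrib)
  have b: "RS_beta t x - RS_Q t z0 / 2^(m+1) = (RS_Q t z - RS_Q t z0) / N"
    unfolding RS_beta_def pw by (simp add: z_def T_def N_def diff_divide_distrib)
  have "cmod (RS_P t z - RS_P t z0) \<le> N * (\<bar>x - x0\<bar> / 1024)" by (rule order_trans[OF norm_fst_le D2])
  moreover have "cmod (RS_Q t z - RS_Q t z0) \<le> N * (\<bar>x - x0\<bar> / 1024)" by (rule order_trans[OF norm_snd_le D2])
  ultimately show ?thesis unfolding a b z0_def[symmetric] T_def[symmetric] using Npos
    by (simp add: norm_divide pos_divide_le_eq mult.commute)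
qed


lemma Re_lb: "cmod w = 1 \<Longrightarrow> - cmod u \<le> Re (w * u)"
  using abs_Re_le_cmod[of "w*u"] by (simp add: norm_mult)

theorem lemma3p9:
  fixes t :: nat and x :: real
  assumes "odd t"
    and "\<bar>x\<bar> \<le> 1/8 \<or> \<bar>x - RS_T t * pi\<bar> \<le> 1/8"
  shows "Re (RS_H t x) \<ge> 1/2"
proof -
  obtain m where t: "t = 2*m+1" using assms(1) oddE by blast
  define T where "T = RS_T t"
  have T: "T = 2^(t+10)" by (simp add: T_def RS_T_def)
  have Tpos: "T > 0" by (simp add: T)
  have c1: "cmod (cis x) = 1" "cmod (cis (2*x)) = 1" by simp_all
  have H: "Re (RS_H t x) = Re (cis x * RS_alpha t x) + Re (cis (2*x) * RS_beta t x)"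
    by (simp add: RS_H_def)
  from assms(2) show ?thesis
  proof
    assume hx: "\<bar>x\<bar> \<le> 1/8"
    have z0: "cis (0 / RS_T t) = 1" by simp
    from approx[OF t, of x 0] RS_one[of m] have
      ea: "cmod (RS_alpha t x - 1) \<le> \<bar>x\<bar> / 1024" and eb: "cmod (RS_beta t x) \<le> \<bar>x\<bar> / 1024"
      unfolding z0 t[symmetric] by auto
    have "Re (cis x * RS_alpha t x) = Re (cis x) + Re (cis x * (RS_alpha t x - 1))"
      by (simp add: algebra_simps)
    also have "\<dots> \<ge> cos x - cmod (RS_alpha t x - 1)" using Re_lb[OF c1(1), of "RS_alpha t x - 1"] by simp
    finally have r1: "Re (cis x * RS_alpha t x) \<ge> cos x - \<bar>x\<bar> / 1024" using ea by linarith
    have r2: "Re (cis (2*x) * RS_beta t x) \<ge> - (\<bar>x\<bar> / 1024)" using Re_lb[OF c1(2), of "RS_beta t x"] eb by linarith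
    have "x^2 \<le> (1/8)^2" using hx by (metis abs_le_square_iff abs_of_nonneg zero_le_divide_1_iff zero_le_numeral)
    then have "cos x \<ge> 1 - 1/128" using cos_lb[of x] by (simp add: power2_eq_square)
    then show ?thesis unfolding H using r1 r2 hx by linarith
  next
    assume hx: "\<bar>x - RS_T t * pi\<bar> \<le> 1/8"
    define y where "y = x - T * pi"
    have hy: "\<bar>y\<bar> \<le> 1/8" using hx by (simp add: y_def T_def)
    have z0: "cis (RS_T t * pi / RS_T t) = -1"
      using Tpos by (simp add: T_def cis.ctr complex_eq_iff)
    from approx[OF t, of x "RS_T t * pi"] RS_mone[of m] have
      ea: "cmod (RS_alpha t x) \<le> \<bar>y\<bar> / 1024" and eb: "cmod (RS_beta t x - 1) \<le> \<bar>y\<bar> / 1024"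
      unfolding z0 t[symmetric] by (auto simp: y_def T_def)
    have "Re (cis (2*x) * RS_beta t x) = Re (cis (2*x)) + Re (cis (2*x) * (RS_beta t x - 1))"
      by (simp add: algebra_simps)
    also have "\<dots> \<ge> cos (2*x) - cmod (RS_beta t x - 1)" using Re_lb[OF c1(2), of "RS_beta t x - 1"] by simp
    finally have r2: "Re (cis (2*x) * RS_beta t x) \<ge> cos (2*x) - \<bar>y\<bar> / 1024" using eb by linarith
    have r1: "Re (cis x * RS_alpha t x) \<ge> - (\<bar>y\<bar> / 1024)" using Re_lb[OF c1(1), of "RS_alpha t x"] ea by linarith
    define n :: nat where "n = 2 * 2^(t+10)"
    have n2: "2 * T = real n" by (simp add: n_def T)
    have ev: "even n" by (simp add: n_def)
    have "cos (2*x) = cos (2*y + real n * pi)" by (simp add: y_def n2[symmetric] algebra_simps)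
    also have "\<dots> = cos (2*y)" using ev by (simp add: cos_add)
    finally have cx: "cos (2*x) = cos (2*y)" .
    have "y^2 \<le> (1/8)^2" using hy by (metis abs_le_square_iff abs_of_nonneg zero_le_divide_1_iff zero_le_numeral)
    then have "(2*y)^2 \<le> (1/4)^2" by (simp add: power_mult_distrib power_divide)
    then have "cos (2*y) \<ge> 1 - 1/32" using cos_lb[of "2*y"] by (simp add: power2_eq_square)
    then show ?thesis unfolding H using r1 r2 hy cx by linarith
  qed
qed

end
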